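(* Let $V$ be a real inner product space with induced norm $\lVert\cdot\rVert$. Let $a,b,a',b'\in V$ and $\gamma\ge0$ satisfy \[ \max\{\lVert x-y\rVert : x,y\in\{a,b,a',b'\}\}\le\gamma\le \lVert a-b\rVert+\lVert a'-b'\rVert . \] Then, with $m=(a+b)/2$ and $m'=(a'+b')/2$, we have $\lVert m-m'\rVert\le\sqrt{\tfrac78}\,\gamma$. *)

theory Defs
  imports "HOL-Analysis.Analysis"
begin

end

theory Submission
  imports Defs
begin

lemma key_id:
  fixes a b a' b' :: "'v::real_inner"
  shows "8 * (norm ((a + b) /\<^sub>R 2 - (a' + b') /\<^sub>R 2))^2 + 2 * (norm (a - b))^2 + 2 * (norm (a' - b'))^2
    = 2 * (norm (a - a'))^2 + 2 * (norm (b - b'))^2 + 2 * (norm (a - b'))^2 + 2 * (norm (b - a'))^2"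
  unfolding power2_norm_eq_inner
  by (simp add: inner_diff_left inner_diff_right inner_add_left inner_add_right inner_commute algebra_simps)

theorem lemma2:
  fixes a b a' b' :: "'v::real_inner" and \<gamma> :: real
  assumes "\<gamma> \<ge> 0"
    and "Max {norm (x - y) | x y. x \<in> {a, b, a', b'} \<and> y \<in> {a, b, a', b'}} \<le> \<gamma>"
    and "\<gamma> \<le> norm (a - b) + norm (a' - b')"
  shows "norm ((a + b) /\<^sub>R 2 - (a' + b') /\<^sub>R 2) \<le> sqrt (7 / 8) * \<gamma>"
proof -
  let ?S = "{a, b, a', b'}"
  let ?M = "{norm (x - y) | x y. x \<in> ?S \<and> y \<in> ?S}"
  have eq: "?M = (\<lambda>(x,y). norm (x - y)) ` (?S \<times> ?S)" by auto
  have fin: "finite ?M" unfolding eq by simp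
  have bnd: "norm (x - y) \<le> \<gamma>" if "x \<in> ?S" "y \<in> ?S" for x y
  proof -
    have "norm (x - y) \<in> ?M" using that by blast
    hence "norm (x - y) \<le> Max ?M" using fin by simp
    thus ?thesis using assms(2) by linarith
  qed
  have h1: "norm (a - a') \<le> \<gamma>" "norm (b - b') \<le> \<gamma>" "norm (a - b') \<le> \<gamma>" "norm (b - a') \<le> \<gamma>"
    by (auto intro: bnd)
  have sq: "(norm (x - y))^2 \<le> \<gamma>^2" if "norm (x - y) \<le> \<gamma>" for x y :: 'v
    using that by (simp add: power_mono)
  let ?n = "norm ((a + b) /\<^sub>R 2 - (a' + b') /\<^sub>R 2)"
  let ?p = "norm (a - b)" and ?q = "norm (a' - b')"
  have "\<gamma>^2 \<le> (?p + ?q)^2" using assms(1,3) by (simp add: power_mono)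
  also have "\<dots> = 2 * ?p^2 + 2 * ?q^2 - (?p - ?q)^2" by (simp add: power2_eq_square algebra_simps)
  also have "\<dots> \<le> 2 * ?p^2 + 2 * ?q^2" by simp
  finally have g: "\<gamma>^2 \<le> 2 * ?p^2 + 2 * ?q^2" .
  have "8 * ?n^2 \<le> 7 * \<gamma>^2"
    using key_id[of a b a' b'] g sq[OF h1(1)] sq[OF h1(2)] sq[OF h1(3)] sq[OF h1(4)] by linarith
  hence "?n^2 \<le> (sqrt (7/8) * \<gamma>)^2" by (simp add: power_mult_distrib)
  thus ?thesis using assms(1) by (simp add: power2_le_iff_abs_le)
qed

end
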